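(* Let $g\in L^\infty[0,1)$ be such that the limit $g(1):=\lim_{r\to1-0}g(r)$ exists and $g(1)\neq0$, and let $\gamma>0$. Then, as $n\to+\infty$, $$\int_0^1\frac{r^n}{\left(1+\log\frac{1}{1-r}\right)^{\gamma}}\,g(r)\,dr=\frac{g(1)}{n(\log n)^{\gamma}}\,(1+o(1)).$$ *)

theory Defs
  imports "HOL-Analysis.Analysis" "HOL-Library.Landau_Symbols"
begin

end

theory Submission
  imports Defs "HOL-Real_Asymp.Real_Asymp"
begin

lemma D_ge1:
  fixes r \<gamma> :: real assumes "0 \<le> r" "r < 1" "0 \<le> \<gamma>"
  shows "1 \<le> (1 + ln (1 / (1 - r))) powr \<gamma>"
proof -
  have "1 \<le> 1 / (1 - r)" using assms by (simp add: field_simps)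
  hence "0 \<le> ln (1 / (1 - r))" by simp
  thus ?thesis using assms by (intro ge_one_powr_ge_zero) auto
qed

lemma D_mono:
  fixes r s \<gamma> :: real assumes "0 \<le> r" "r \<le> s" "s < 1" "0 \<le> \<gamma>"
  shows "(1 + ln (1 / (1 - r))) powr \<gamma> \<le> (1 + ln (1 / (1 - s))) powr \<gamma>"
proof -
  have "1 \<le> 1 / (1 - r)" using assms by (simp add: field_simps)
  hence h0: "0 \<le> ln (1 / (1 - r))" by simp
  have "1 / (1 - r) \<le> 1 / (1 - s)" using assms by (intro divide_left_mono) auto
  hence "ln (1 / (1 - r)) \<le> ln (1 / (1 - s))" using assms by simp
  thus ?thesis using assms h0 by (intro powr_mono2) auto
qed

lemma h_meas: "(\<lambda>r::real. r ^ n / (1 + ln (1 / (1 - r))) powr \<gamma>) \<in> borel_measurable borel"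
  by measurable

lemma const_si: "set_integrable lborel {0..<1::real} (\<lambda>_. B::real)"
proof -
  have "set_integrable lborel {0..1::real} (\<lambda>_. B)"
    unfolding set_integrable_def by (rule borel_integrable_compact) auto
  thus ?thesis by (rule set_integrable_subset) auto
qed

lemma si_bdd:
  fixes f :: "real \<Rightarrow> 'b::{banach,second_countable_topology}"
  assumes "set_borel_measurable lborel {0..<1} f"
    "AE x in lborel. x \<in> {0..<1} \<longrightarrow> norm (f x) \<le> B"
  shows "set_integrable lborel {0..<1} f"
  apply (rule set_integrable_bound[OF const_si[of B] assms(1)])
  using assms(2) by eventually_elim auto

lemma h_si:
  assumes "0 \<le> \<gamma>"
  shows "set_integrable lborel {0..<1::real} (\<lambda>r. r ^ n / (1 + ln (1 / (1 - r))) powr \<gamma>)"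
proof (rule si_bdd[where B=1])
  show "set_borel_measurable lborel {0..<1} (\<lambda>r. r ^ n / (1 + ln (1 / (1 - r))) powr \<gamma>)"
    unfolding set_borel_measurable_def by measurable
  show "AE x in lborel. x \<in> {0..<1} \<longrightarrow> norm (x ^ n / (1 + ln (1 / (1 - x))) powr \<gamma>) \<le> 1"
  proof (intro AE_I2 impI)
    fix x :: real assume x: "x \<in> {0..<1}"
    have d: "1 \<le> (1 + ln (1 / (1 - x))) powr \<gamma>" using D_ge1[of x \<gamma>] x assms by auto
    have "x ^ n \<le> 1" using x by (intro power_le_one) auto
    thus "norm (x ^ n / (1 + ln (1 / (1 - x))) powr \<gamma>) \<le> 1"
      using d x by (simp add: abs_of_nonneg divide_le_eq_1)
  qed
qed

lemma pow_si: "set_integrable lborel {0..<1::real} (\<lambda>r. r ^ n)"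
proof -
  have "set_integrable lborel {0..1::real} (\<lambda>r. r ^ n)"
    unfolding set_integrable_def by (rule borel_integrable_compact) (auto intro!: continuous_intros)
  thus ?thesis by (rule set_integrable_subset) auto
qed

lemma pow_int: "(LINT r:{0..<1::real}|lborel. r ^ n) = 1 / (real n + 1)"
proof -
  have "(LINT r:{0..<1::real}|lborel. r ^ n) = (LINT r:{0..1::real}|lborel. r ^ n)"
    by (rule set_integral_cong_set[symmetric])
       (auto simp: set_borel_measurable_def intro!: eventually_mono[OF AE_lborel_singleton[of 1]])
  also have "\<dots> = (\<integral>x. x^n * indicator {0..1} x \<partial>lborel)"
    unfolding set_lebesgue_integral_def by (simp add: mult.commute)
  also have "\<dots> = 1 / (real n + 1)" by (subst integral_power) auto
  finally show ?thesis .
qed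

lemma pow_int_le: assumes "0 \<le> t" "t < 1"
  shows "(LINT r:{0..<1::real}|lborel. indicator {0..t} r * r ^ n) = t ^ (n+1) / (real n + 1)"
proof -
  have "(LINT r:{0..<1::real}|lborel. indicator {0..t} r * r ^ n) = (\<integral>x. x^n * indicator {0..t} x \<partial>lborel)"
    unfolding set_lebesgue_integral_def using assms
    by (intro Bochner_Integration.integral_cong) (auto simp: indicator_def)
  also have "\<dots> = t^(n+1) / (real n + 1)" using assms by (subst integral_power) auto
  finally show ?thesis .
qed


lemma div_anti: "0 \<le> (a::real) \<Longrightarrow> 1 \<le> P \<Longrightarrow> P \<le> Q \<Longrightarrow> a / Q \<le> a / P"
  by (intro divide_left_mono mult_pos_pos) auto

lemma div_le_self: "0 \<le> (a::real) \<Longrightarrow> 1 \<le> P \<Longrightarrow> a / P \<le> a"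
  by (simp add: divide_le_eq mult_le_cancel_left1)

lemma inv_le1: "1 \<le> (D::real) \<Longrightarrow> 0 < 1/D \<and> 1/D \<le> 1" by simp


lemma J_lower:
  fixes t \<gamma> :: real assumes t: "0 \<le> t" "t < 1" and g: "0 \<le> \<gamma>"
  shows "t ^ (n+1) / ((real n + 1) * (1 + ln (1 / (1 - t))) powr \<gamma>)
     \<le> (LINT r:{0..<1}|lborel. r ^ n / (1 + ln (1 / (1 - r))) powr \<gamma>)"
proof -
  define c where "c = 1 / (1 + ln (1 / (1 - t))) powr \<gamma>"
  have Dt: "1 \<le> (1 + ln (1 / (1 - t))) powr \<gamma>" using D_ge1[OF t g] .
  have "0 < c \<and> c \<le> 1" unfolding c_def by (rule inv_le1[OF Dt])
  hence c: "0 < c" "c \<le> 1" by auto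
  have "(LINT r:{0..<1}|lborel. indicator {0..t} r * r ^ n * c)
        \<le> (LINT r:{0..<1}|lborel. r ^ n / (1 + ln (1 / (1 - r))) powr \<gamma>)"
  proof (rule set_integral_mono)
    show "set_integrable lborel {0..<1} (\<lambda>r. indicator {0..t} r * r ^ n * c)"
    proof (rule si_bdd[where B=1])
      show "set_borel_measurable lborel {0..<1} (\<lambda>r. indicator {0..t} r * r ^ n * c)"
        unfolding set_borel_measurable_def by measurable
      show "AE x in lborel. x \<in> {0..<1} \<longrightarrow> norm (indicator {0..t} x * x ^ n * c) \<le> 1"
      proof (intro AE_I2 impI)
        fix x :: real assume x: "x \<in> {0..<1}"
        have "x ^ n \<le> 1" using x by (intro power_le_one) auto
        hence "indicator {0..t} x * x ^ n * c \<le> 1 * 1 * 1" using x c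
          by (intro mult_mono) (auto simp: indicator_def)
        moreover have "0 \<le> indicator {0..t} x * x ^ n * c" using x c by auto
        ultimately show "norm (indicator {0..t} x * x ^ n * c) \<le> 1" by simp
      qed
    qed
    show "set_integrable lborel {0..<1} (\<lambda>r. r ^ n / (1 + ln (1 / (1 - r))) powr \<gamma>)"
      using h_si[OF g] .
    fix x :: real assume x: "x \<in> {0..<1}"
    show "indicator {0..t} x * x ^ n * c \<le> x ^ n / (1 + ln (1 / (1 - x))) powr \<gamma>"
    proof (cases "x \<le> t")
      case True
      have Dx: "1 \<le> (1 + ln (1 / (1 - x))) powr \<gamma>" using D_ge1[of x \<gamma>] x g by auto
      have "(1 + ln (1 / (1 - x))) powr \<gamma> \<le> (1 + ln (1 / (1 - t))) powr \<gamma>"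
        using D_mono[of x t \<gamma>] x True t g by auto
      hence "x ^ n / (1 + ln (1 / (1 - t))) powr \<gamma> \<le> x ^ n / (1 + ln (1 / (1 - x))) powr \<gamma>"
        using Dx x by (intro div_anti) auto
      thus ?thesis using True x by (simp add: c_def indicator_def)
    next
      case False
      thus ?thesis using x g by (auto simp: indicator_def)
    qed
  qed
  also have "(LINT r:{0..<1}|lborel. indicator {0..t} r * r ^ n * c) = t ^ (n+1) / (real n + 1) * c"
    using pow_int_le[OF t, of n] by simp
  finally show ?thesis by (simp add: c_def)
qed

lemma J_upper:
  fixes t \<gamma> :: real assumes t: "0 \<le> t" "t < 1" and g: "0 \<le> \<gamma>"
  shows "(LINT r:{0..<1}|lborel. r ^ n / (1 + ln (1 / (1 - r))) powr \<gamma>)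
     \<le> t ^ n + 1 / ((real n + 1) * (1 + ln (1 / (1 - t))) powr \<gamma>)"
proof -
  define c where "c = 1 / (1 + ln (1 / (1 - t))) powr \<gamma>"
  have Dt: "1 \<le> (1 + ln (1 / (1 - t))) powr \<gamma>" using D_ge1[OF t g] .
  have "0 < c \<and> c \<le> 1" unfolding c_def by (rule inv_le1[OF Dt])
  hence c: "0 < c" "c \<le> 1" by auto
  have "(LINT r:{0..<1}|lborel. r ^ n / (1 + ln (1 / (1 - r))) powr \<gamma>)
       \<le> (LINT r:{0..<1}|lborel. t ^ n + r ^ n * c)"
  proof (rule set_integral_mono)
    show "set_integrable lborel {0..<1} (\<lambda>r. t ^ n + r ^ n * c)"
      using const_si pow_si by (intro set_integral_add) auto
    show "set_integrable lborel {0..<1} (\<lambda>r. r ^ n / (1 + ln (1 / (1 - r))) powr \<gamma>)"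
      using h_si[OF g] .
    fix x :: real assume x: "x \<in> {0..<1}"
    have Dx: "1 \<le> (1 + ln (1 / (1 - x))) powr \<gamma>" using D_ge1[of x \<gamma>] x g by auto
    show "x ^ n / (1 + ln (1 / (1 - x))) powr \<gamma> \<le> t ^ n + x ^ n * c"
    proof (cases "x \<le> t")
      case True
      have "x ^ n / (1 + ln (1 / (1 - x))) powr \<gamma> \<le> x ^ n"
        using Dx x by (intro div_le_self) auto
      also have "\<dots> \<le> t ^ n" using x True by (intro power_mono) auto
      finally show ?thesis using x c by (intro add_increasing2) auto
    next
      case False
      have "(1 + ln (1 / (1 - t))) powr \<gamma> \<le> (1 + ln (1 / (1 - x))) powr \<gamma>"
        using D_mono[of t x \<gamma>] x False t g by auto
      hence "x ^ n / (1 + ln (1 / (1 - x))) powr \<gamma> \<le> x ^ n * c"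
        unfolding c_def using Dt x by (subst times_divide_eq_right, simp only: mult_1_right, intro div_anti) auto
      thus ?thesis using t by (intro add_increasing) auto
    qed
  qed
  also have "(LINT r:{0..<1}|lborel. t ^ n + r ^ n * c) = t ^ n + c / (real n + 1)"
  proof -
    have "(LINT r:{0..<1}|lborel. t ^ n + r ^ n * c) = (LINT r:{0..<1}|lborel. t ^ n * r ^ 0) + (LINT r:{0..<1}|lborel. r ^ n * c)"
      using const_si pow_si by (subst set_integral_add) auto
    also have "(LINT r:{0..<1}|lborel. t ^ n * r ^ 0) = t ^ n * (LINT r:{0..<1}|lborel. r ^ 0)"
      by (rule set_integral_mult_right)
    also have "(LINT r:{0..<1}|lborel. r ^ n * c) = (LINT r:{0..<1}|lborel. r ^ n) * c"
      by (rule set_integral_mult_left)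
    also have "t ^ n * (LINT r:{0..<1}|lborel. r ^ 0) + (LINT r:{0..<1}|lborel. r ^ n) * c = t ^ n + c / (real n + 1)"
      by (simp only: pow_int) simp
    finally show ?thesis .
  qed
  finally show ?thesis by (simp add: c_def mult.commute)
qed


lemma J_ratio:
  fixes \<gamma> :: real assumes g: "0 < \<gamma>"
  shows "((\<lambda>n. (LINT r:{0..<1}|lborel. r ^ n / (1 + ln (1 / (1 - r))) powr \<gamma>)
            * (real n * ln (real n) powr \<gamma>)) \<longlonglongrightarrow> 1)"
proof (rule tendsto_sandwich)
  define J where "J n = (LINT r:{0..<1}|lborel. r ^ n / (1 + ln (1 / (1 - r))) powr \<gamma>)" for n :: nat
  let ?T = "\<lambda>n::nat. real n * ln (real n) powr \<gamma>"
  let ?tl = "\<lambda>n::nat. 1 - 1 / (real n * ln (real n))"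
  let ?tu = "\<lambda>n::nat. 1 - ln (real n) ^ 2 / real n"
  show "((\<lambda>n. ?tl n ^ (n+1) / ((real n + 1) * (1 + ln (1 / (1 - ?tl n))) powr \<gamma>) * ?T n) \<longlonglongrightarrow> 1)"
    using g by real_asymp
  show "((\<lambda>n. (?tu n ^ n + 1 / ((real n + 1) * (1 + ln (1 / (1 - ?tu n))) powr \<gamma>)) * ?T n) \<longlonglongrightarrow> 1)"
    using g by real_asymp
  have ev1: "eventually (\<lambda>n::nat. 0 \<le> ?tl n) at_top" by real_asymp
  have ev2: "eventually (\<lambda>n::nat. ?tl n < 1) at_top" by real_asymp
  have ev3: "eventually (\<lambda>n::nat. 0 \<le> ?tu n) at_top" by real_asymp
  have ev4: "eventually (\<lambda>n::nat. ?tu n < 1) at_top" by real_asymp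
  have ev5: "eventually (\<lambda>n::nat. 0 \<le> ?T n) at_top" by (intro always_eventually) auto
  show "eventually (\<lambda>n. ?tl n ^ (n+1) / ((real n + 1) * (1 + ln (1 / (1 - ?tl n))) powr \<gamma>) * ?T n
     \<le> (LINT r:{0..<1}|lborel. r ^ n / (1 + ln (1 / (1 - r))) powr \<gamma>) * ?T n) at_top"
    using ev1 ev2 ev5 by eventually_elim (intro mult_right_mono J_lower, use g in auto)
  show "eventually (\<lambda>n. (LINT r:{0..<1}|lborel. r ^ n / (1 + ln (1 / (1 - r))) powr \<gamma>) * ?T n
     \<le> (?tu n ^ n + 1 / ((real n + 1) * (1 + ln (1 / (1 - ?tu n))) powr \<gamma>)) * ?T n) at_top"
    using ev3 ev4 ev5 by eventually_elim (intro mult_right_mono J_upper, use g in auto)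
qed


lemma cmeas:
  fixes g :: "real \<Rightarrow> complex"
  assumes meas: "set_borel_measurable lborel {0..<1} g"
  shows "set_borel_measurable lborel {0..<1}
           (\<lambda>r. complex_of_real (r ^ n / (1 + ln (1 / (1 - r))) powr \<gamma>) * g r)"
proof -
  have m: "(\<lambda>x. indicator {0..<1} x *\<^sub>R g x) \<in> borel_measurable lborel"
    using meas unfolding set_borel_measurable_def .
  have "(\<lambda>x. complex_of_real (x ^ n / (1 + ln (1 / (1 - x))) powr \<gamma>) * (indicator {0..<1} x *\<^sub>R g x))
        \<in> borel_measurable lborel"
    using m by measurable
  moreover have "(\<lambda>x. complex_of_real (x ^ n / (1 + ln (1 / (1 - x))) powr \<gamma>) * (indicator {0..<1} x *\<^sub>R g x))
     = (\<lambda>x. indicator {0..<1} x *\<^sub>R (complex_of_real (x ^ n / (1 + ln (1 / (1 - x))) powr \<gamma>) * g x))"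
    by (auto simp: indicator_def fun_eq_iff)
  ultimately show ?thesis unfolding set_borel_measurable_def by simp
qed

lemma key_bound:
  fixes g :: "real \<Rightarrow> complex" and L :: complex and \<gamma> s \<epsilon> C :: real
  assumes meas: "set_borel_measurable lborel {0..<1} g"
    and Cb: "AE r in lborel. r \<in> {0..<1} \<longrightarrow> norm (g r) \<le> C"
    and s: "0 \<le> s" "s < 1" and e: "0 \<le> \<epsilon>"
    and near: "\<And>y. s < y \<Longrightarrow> y < 1 \<Longrightarrow> norm (g y - L) \<le> \<epsilon>"
    and g: "0 \<le> \<gamma>"
  shows "norm ((LINT r:{0..<1}|lborel. complex_of_real (r ^ n / (1 + ln (1 / (1 - r))) powr \<gamma>) * g r)
           - L * complex_of_real (LINT r:{0..<1}|lborel. r ^ n / (1 + ln (1 / (1 - r))) powr \<gamma>))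
         \<le> \<epsilon> * (LINT r:{0..<1}|lborel. r ^ n / (1 + ln (1 / (1 - r))) powr \<gamma>) + (\<bar>C\<bar> + norm L) * s ^ n"
proof -
  define h where "h r = r ^ n / (1 + ln (1 / (1 - r))) powr \<gamma>" for r :: real
  define M where "M = \<bar>C\<bar> + norm L"
  have M: "0 \<le> M" by (simp add: M_def)
  have h01: "0 \<le> h r \<and> h r \<le> r ^ n" if "r \<in> {0..<1}" for r
  proof -
    have Dr: "1 \<le> (1 + ln (1 / (1 - r))) powr \<gamma>" using D_ge1[of r \<gamma>] that g by auto
    show ?thesis unfolding h_def using Dr that by (auto intro: div_le_self)
  qed
  have hle1: "h r \<le> 1" if "r \<in> {0..<1}" for r
    using h01[OF that] power_le_one[of r n] that by auto
  have hsi: "set_integrable lborel {0..<1} h" unfolding h_def by (rule h_si[OF g])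
  have mh: "set_borel_measurable lborel {0..<1} (\<lambda>r. complex_of_real (h r) * g r)"
    unfolding h_def by (rule cmeas[OF meas])
  have mhL: "set_borel_measurable lborel {0..<1} (\<lambda>r. complex_of_real (h r) * L)"
    unfolding h_def set_borel_measurable_def by measurable
  have i1: "set_integrable lborel {0..<1} (\<lambda>r. complex_of_real (h r) * g r)"
  proof (rule si_bdd[OF mh, where B="\<bar>C\<bar>"])
    show "AE x in lborel. x \<in> {0..<1} \<longrightarrow> norm (complex_of_real (h x) * g x) \<le> \<bar>C\<bar>"
      using Cb
    proof eventually_elim
      case (elim x)
      show ?case
      proof
        assume x: "x \<in> {0..<1}"
        have "norm (complex_of_real (h x) * g x) = h x * norm (g x)"
          using h01[OF x] by (simp add: norm_mult)
        also have "\<dots> \<le> 1 * \<bar>C\<bar>" using h01[OF x] hle1[OF x] elim x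
          by (intro mult_mono) auto
        finally show "norm (complex_of_real (h x) * g x) \<le> \<bar>C\<bar>" by simp
      qed
    qed
  qed
  have i2: "set_integrable lborel {0..<1} (\<lambda>r. complex_of_real (h r) * L)"
  proof (rule si_bdd[OF mhL, where B="norm L"])
    show "AE x in lborel. x \<in> {0..<1} \<longrightarrow> norm (complex_of_real (h x) * L) \<le> norm L"
    proof (intro AE_I2 impI)
      fix x :: real assume x: "x \<in> {0..<1}"
      have "norm (complex_of_real (h x) * L) = h x * norm L"
        using h01[OF x] by (simp add: norm_mult)
      also have "\<dots> \<le> 1 * norm L" using h01[OF x] hle1[OF x]
        by (intro mult_mono) auto
      finally show "norm (complex_of_real (h x) * L) \<le> norm L" by simp
    qed
  qed
  have eq: "(LINT r:{0..<1}|lborel. complex_of_real (h r) * g r) - L * complex_of_real (LINT r:{0..<1}|lborel. h r)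
      = (LINT r:{0..<1}|lborel. complex_of_real (h r) * g r - complex_of_real (h r) * L)"
  proof -
    have "(LINT r:{0..<1}|lborel. complex_of_real (h r) * L) = (LINT r:{0..<1}|lborel. complex_of_real (h r)) * L"
      by (rule set_integral_mult_left)
    also have "\<dots> = L * complex_of_real (LINT r:{0..<1}|lborel. h r)"
      by (simp add: set_integral_complex_of_real mult.commute)
    finally have e1: "(LINT r:{0..<1}|lborel. complex_of_real (h r) * L) = L * complex_of_real (LINT r:{0..<1}|lborel. h r)" .
    show ?thesis by (simp only: set_integral_diff(2)[OF i1 i2] e1)
  qed
  have i3: "set_integrable lborel {0..<1} (\<lambda>r. complex_of_real (h r) * g r - complex_of_real (h r) * L)"
    using set_integral_diff(1)[OF i1 i2] .
  have "norm (LINT r:{0..<1}|lborel. complex_of_real (h r) * g r - complex_of_real (h r) * L)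
        \<le> (LINT r:{0..<1}|lborel. norm (complex_of_real (h r) * g r - complex_of_real (h r) * L))"
    by (rule set_integral_norm_bound[OF i3])
  also have "\<dots> \<le> (LINT r:{0..<1}|lborel. \<epsilon> * h r + M * s ^ n)"
  proof (rule set_integral_mono_AE)
    show "set_integrable lborel {0..<1} (\<lambda>r. norm (complex_of_real (h r) * g r - complex_of_real (h r) * L))"
      by (rule set_integrable_norm[OF i3])
    show "set_integrable lborel {0..<1} (\<lambda>r. \<epsilon> * h r + M * s ^ n)"
      using hsi const_si by (intro set_integral_add) auto
    show "AE x\<in>{0..<1} in lborel. norm (complex_of_real (h x) * g x - complex_of_real (h x) * L) \<le> \<epsilon> * h x + M * s ^ n"
      using Cb
    proof eventually_elim
      case (elim x)
      show ?case
      proof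
        assume x: "x \<in> {0..<1}"
        have nx: "norm (complex_of_real (h x) * g x - complex_of_real (h x) * L) = h x * norm (g x - L)"
          using h01[OF x] by (simp add: norm_mult flip: right_diff_distrib)
        have sM: "0 \<le> M * s ^ n" using M s by simp
        have eh: "0 \<le> \<epsilon> * h x" using e h01[OF x] by simp
        show "norm (complex_of_real (h x) * g x - complex_of_real (h x) * L) \<le> \<epsilon> * h x + M * s ^ n"
        proof (cases "s < x")
          case True
          have "h x * norm (g x - L) \<le> h x * \<epsilon>" using near[OF True] x h01[OF x]
            by (intro mult_left_mono) auto
          thus ?thesis using nx sM by (simp add: mult.commute)
        next
          case False
          have "norm (g x - L) \<le> norm (g x) + norm L" by (rule norm_triangle_ineq4)
          also have "\<dots> \<le> M" using elim x by (simp add: M_def)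
          finally have gM: "norm (g x - L) \<le> M" .
          have "h x \<le> s ^ n" using h01[OF x] power_mono[of x s n] False x by auto
          hence "h x * norm (g x - L) \<le> s ^ n * M" using gM h01[OF x] s
            by (intro mult_mono) auto
          thus ?thesis using nx eh by (simp add: mult.commute)
        qed
      qed
    qed
  qed
  also have "(LINT r:{0..<1}|lborel. \<epsilon> * h r + M * s ^ n) = \<epsilon> * (LINT r:{0..<1}|lborel. h r) + M * s ^ n"
  proof -
    have "(LINT r:{0..<1}|lborel. \<epsilon> * h r + M * s ^ n) = (LINT r:{0..<1}|lborel. \<epsilon> * h r) + (LINT r:{0..<1}|lborel. (M * s ^ n) * r ^ 0)"
      using hsi const_si by (subst set_integral_add) auto
    also have "(LINT r:{0..<1}|lborel. (M * s ^ n) * r ^ 0) = (M * s ^ n) * (LINT r:{0..<1}|lborel. r ^ 0)"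
      by (rule set_integral_mult_right)
    also have "(LINT r:{0..<1}|lborel. \<epsilon> * h r) = \<epsilon> * (LINT r:{0..<1}|lborel. h r)"
      by (rule set_integral_mult_right)
    finally show ?thesis by (simp only: pow_int) simp
  qed
  finally show ?thesis using eq unfolding h_def M_def by simp
qed


theorem lemma5p1:
  fixes g :: "real \<Rightarrow> complex" and L :: complex and \<gamma> :: real
  assumes meas: "set_borel_measurable lborel {0..<1} g"
    and ess_bdd: "\<exists>C. AE r in lborel. r \<in> {0..<1} \<longrightarrow> norm (g r) \<le> C"
    and lim: "(g \<longlongrightarrow> L) (at_left 1)"
    and L_nz: "L \<noteq> 0"
    and gamma_pos: "\<gamma> > 0"
  shows "(\<lambda>n::nat. LINT r:{0..<1}|lborel.
            complex_of_real (r ^ n / (1 + ln (1 / (1 - r))) powr \<gamma>) * g r)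
         \<sim>[at_top] (\<lambda>n. L / complex_of_real (real n * (ln (real n)) powr \<gamma>))"
proof -
  define J where "J n = (LINT r:{0..<1}|lborel. r ^ n / (1 + ln (1 / (1 - r))) powr \<gamma>)" for n :: nat
  define T where "T n = real n * ln (real n) powr \<gamma>" for n :: nat
  define F where "F n = (LINT r:{0..<1}|lborel. complex_of_real (r ^ n / (1 + ln (1 / (1 - r))) powr \<gamma>) * g r)" for n :: nat
  obtain C where C: "AE r in lborel. r \<in> {0..<1} \<longrightarrow> norm (g r) \<le> C" using ess_bdd by blast
  define M where "M = \<bar>C\<bar> + norm L"
  have M: "0 \<le> M" by (simp add: M_def)
  have hJ: "(\<lambda>n. J n * T n) \<longlonglongrightarrow> 1"
    unfolding J_def T_def using J_ratio[OF gamma_pos] .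
  have Tpos: "eventually (\<lambda>n. 0 < T n) at_top"
    using eventually_ge_at_top[of 2]
  proof eventually_elim
    case (elim n)
    hence "0 < ln (real n)" by simp
    thus ?case using elim by (simp add: T_def)
  qed
  have "(\<lambda>n. F n - L / complex_of_real (T n)) \<in> o(\<lambda>n. L / complex_of_real (T n))"
  proof (rule landau_o.smallI)
    fix c :: real assume c: "0 < c"
    define \<epsilon> where "\<epsilon> = min 1 (c * norm L / (3 + norm L))"
    have q: "0 < c * norm L / (3 + norm L)" using c L_nz by (intro divide_pos_pos mult_pos_pos) (auto simp: add_pos_nonneg)
    have q2: "c * norm L / (3 + norm L) * (3 + norm L) = c * norm L"
    proof -
      have "3 + norm L \<noteq> 0" by (smt (verit) norm_ge_zero)
      thus ?thesis by simp
    qed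
    have e3: "\<epsilon> * (3 + norm L) \<le> c * norm L"
      using mult_right_mono[of \<epsilon> "c * norm L / (3 + norm L)" "3 + norm L"] q2
      by (simp add: \<epsilon>_def)
    have e: "0 < \<epsilon>" "\<epsilon> \<le> 1" "\<epsilon> * (3 + norm L) \<le> c * norm L"
      using q e3 by (auto simp: \<epsilon>_def)
    have ev1: "eventually (\<lambda>n. dist (J n * T n) 1 < \<epsilon>) at_top"
      using tendstoD[OF hJ e(1)] .
    have "eventually (\<lambda>r. dist (g r) L < \<epsilon>) (at_left 1)"
      using tendstoD[OF lim e(1)] .
    then obtain b where b: "b < 1" "\<And>y. b < y \<Longrightarrow> y < 1 \<Longrightarrow> dist (g y) L < \<epsilon>"
      using eventually_at_left[of 0 "1::real"] by auto
    define s where "s = max b (1/2)"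
    have s: "0 < s" "s < 1" using b by (auto simp: s_def)
    have near: "norm (g y - L) \<le> \<epsilon>" if "s < y" "y < 1" for y
      using b(2)[of y] that by (auto simp: s_def dist_norm)
    have "(\<lambda>n::nat. s ^ n * (real n * ln (real n) powr \<gamma>)) \<longlonglongrightarrow> 0"
      using s gamma_pos by real_asymp
    hence "(\<lambda>n. M * (s ^ n * T n)) \<longlonglongrightarrow> 0"
      unfolding T_def by (intro tendsto_mult_right_zero)
    hence ev2: "eventually (\<lambda>n. dist (M * (s ^ n * T n)) 0 < \<epsilon>) at_top"
      using tendstoD e(1) by blast
    show "eventually (\<lambda>n. norm (F n - L / complex_of_real (T n))
            \<le> c * norm (L / complex_of_real (T n))) at_top"
      using ev1 ev2 Tpos
    proof eventually_elim
      case (elim n)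
      have Tn: "0 < T n" using elim by simp
      have kb: "norm (F n - L * complex_of_real (J n)) \<le> \<epsilon> * J n + M * s ^ n"
        unfolding F_def J_def M_def
        by (rule key_bound[OF meas C]) (use s e near gamma_pos in auto)
      have d1: "\<bar>J n * T n - 1\<bar> < \<epsilon>" using elim by (simp add: dist_real_def)
      have Jd: "\<bar>J n - 1 / T n\<bar> \<le> \<epsilon> / T n"
      proof -
        have "J n - 1 / T n = (J n * T n - 1) / T n" using Tn by (simp add: diff_divide_distrib)
        hence "\<bar>J n - 1 / T n\<bar> = \<bar>J n * T n - 1\<bar> / T n" using Tn by (simp add: abs_divide)
        thus ?thesis using d1 Tn by (simp add: divide_right_mono)
      qed
      have J2: "J n \<le> 2 / T n"
      proof -
        have "J n \<le> 1 / T n + \<epsilon> / T n" using Jd by linarith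
        also have "\<dots> \<le> 2 / T n" using e Tn by (simp add: add_divide_distrib[symmetric] divide_right_mono)
        finally show ?thesis .
      qed
      have Ms: "M * s ^ n \<le> \<epsilon> / T n"
      proof -
        have "M * s ^ n * T n \<le> \<epsilon>" using elim M s by (simp add: dist_real_def mult.assoc)
        thus ?thesis by (subst pos_le_divide_eq[OF Tn])
      qed
      have split: "F n - L / complex_of_real (T n)
          = (F n - L * complex_of_real (J n)) + L * complex_of_real (J n - 1 / T n)"
      proof -
        have "complex_of_real (J n - 1 / T n) = of_real (J n) - 1 / of_real (T n)" by simp
        thus ?thesis by (simp add: right_diff_distrib)
      qed
      have "norm (F n - L / complex_of_real (T n))
          \<le> norm (F n - L * complex_of_real (J n)) + norm L * \<bar>J n - 1 / T n\<bar>"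
        unfolding split by (rule order_trans[OF norm_triangle_ineq]) (simp only: norm_mult norm_of_real order_refl)
      also have "\<dots> \<le> (\<epsilon> * J n + M * s ^ n) + norm L * (\<epsilon> / T n)"
        using kb Jd by (intro add_mono mult_left_mono) auto
      also have "\<dots> \<le> (\<epsilon> * (2 / T n) + \<epsilon> / T n) + norm L * (\<epsilon> / T n)"
        using J2 Ms e by (intro add_mono mult_left_mono) auto
      also have "\<dots> = \<epsilon> * (3 + norm L) / T n" by (simp add: add_divide_distrib algebra_simps)
      also have "\<dots> \<le> c * norm L / T n" using e Tn by (intro divide_right_mono) auto
      also have "\<dots> = c * norm (L / complex_of_real (T n))" using Tn by (simp add: norm_divide)
      finally show ?case .
    qed
  qed
  thus ?thesis unfolding asymp_equiv_altdef F_def T_def .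
qed

end
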